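(* For all positive integers $\ell,k$, $$\det\left(f(\ell i - 1, x, qs)^j \big(-f(\ell i, x, s)\big)^{k-j}\right)_{i,j=0}^k = \det\left(f(\ell i, x, s)^j f(\ell i - 1, x, qs)^{k-j}\right)_{i,j=0}^k$$ $$= (-1)^{\binom{k+1}{3} \ell}\, s^{-\binom{k+1}{2} + \binom{k+1}{3} \ell}\, q^{\binom{k+1}{3} \binom{\ell}{2} + \binom{k+1}{4} \ell^2} \prod_{j=0}^{k-1} \mathrm{fac}(k-j, x, q^{\ell j} s, \ell).$$
   Context: Let $x,s,q$ be indeterminates; all quantities live in the field of rational functions in $x,s,q$. The Carlitz $q$-Fibonacci polynomials $f(n,x,s)$ are defined by $f(0,x,s)=0$, $f(1,x,s)=1$ and $f(n, x, s) = x f(n-1, x, s) + q^{n-2} s f(n-2, x, s)$; this recurrence is required to hold for all $n\in\mathbb{Z}$, which uniquely extends $f(n,x,s)$ to negative $n$ (e.g. $f(-1,x,s)=1/(q^{-1}s)$ times appropriate terms as determined by the recurrence). Here $f(n,x,q^a s)$ means $f(n,x,s)$ with $s$ replaced by $q^a s$. For positive integers $r,m$ define $\mathrm{fac}(r,x,s,m)=\prod_{i=1}^r f(im,x,s)$. *)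

theory Defs
  imports "Jordan_Normal_Form.Determinant"
begin

fun cfib_nat :: "nat \<Rightarrow> 'a::field \<Rightarrow> 'a \<Rightarrow> 'a \<Rightarrow> 'a" where
  "cfib_nat 0 x s q = 0"
| "cfib_nat (Suc 0) x s q = 1"
| "cfib_nat (Suc (Suc n)) x s q = x * cfib_nat (Suc n) x s q + q ^ n * s * cfib_nat n x s q"

text \<open>Backward extension: cfib_neg m x s q = f(1 - m, x, s), obtained by solving
  f(n) = x f(n-1) + q^(n-2) s f(n-2) for f(n-2), with n = 1 - m.\<close>
fun cfib_neg :: "nat \<Rightarrow> 'a::field \<Rightarrow> 'a \<Rightarrow> 'a \<Rightarrow> 'a" where
  "cfib_neg 0 x s q = 1"
| "cfib_neg (Suc 0) x s q = 0"
| "cfib_neg (Suc (Suc m)) x s q =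
     (cfib_neg m x s q - x * cfib_neg (Suc m) x s q) / (q powi (- 1 - int m) * s)"

definition cfib :: "int \<Rightarrow> 'a::field \<Rightarrow> 'a \<Rightarrow> 'a \<Rightarrow> 'a" where
  "cfib n x s q = (if 0 \<le> n then cfib_nat (nat n) x s q else cfib_neg (nat (1 - n)) x s q)"

definition cfac :: "nat \<Rightarrow> 'a::field \<Rightarrow> 'a \<Rightarrow> nat \<Rightarrow> 'a \<Rightarrow> 'a" where
  "cfac r x s m q = (\<Prod>i = 1..r. cfib (int (i * m)) x s q)"

end

theory Submission
  imports Defs
begin


definition hvm :: "nat \<Rightarrow> (nat \<Rightarrow> 'a::field) \<Rightarrow> (nat \<Rightarrow> 'a) \<Rightarrow> 'a mat" where
  "hvm n a b = mat n n (\<lambda>(i,j). b i ^ j * a i ^ (n - 1 - j))"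

lemma det_row0_single:
  fixes A :: "'a::comm_ring_1 mat"
  assumes A: "A \<in> carrier_mat (Suc n) (Suc n)" and j0: "j0 < Suc n"
    and z: "\<And>j. j < Suc n \<Longrightarrow> j \<noteq> j0 \<Longrightarrow> A $$ (0,j) = 0"
  shows "det A = A $$ (0,j0) * cofactor A 0 j0"
proof -
  have "det A = (\<Sum>j<Suc n. A $$ (0,j) * cofactor A 0 j)"
    by (rule laplace_expansion_row[OF A], simp)
  also have "\<dots> = (\<Sum>j<Suc n. if j = j0 then A $$ (0,j) * cofactor A 0 j else 0)"
    by (rule sum.cong, auto simp: z)
  also have "\<dots> = A $$ (0,j0) * cofactor A 0 j0" using j0 by simp
  finally show ?thesis .
qed

lemma det_rows_scale:
  fixes c :: "nat \<Rightarrow> 'a::comm_ring_1"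
  shows "det (mat n n (\<lambda>(i,j). c i * g i j)) = (\<Prod>i<n. c i) * det (mat n n (\<lambda>(i,j). g i j))"
proof -
  let ?a = "\<lambda>i. vec n (\<lambda>j. g i j)"
  have a: "?a \<in> {0..<n} \<rightarrow> carrier_vec n" by auto
  have 1: "mat n n (\<lambda>(i,j). c i * g i j) = mat\<^sub>r n n (\<lambda>i. c i \<cdot>\<^sub>v ?a i)"
    by (rule eq_matI, auto)
  have 2: "mat n n (\<lambda>(i,j). g i j) = mat\<^sub>r n n (\<lambda>i. ?a i)"
    by (rule eq_matI, auto)
  show ?thesis unfolding 1 2 det_rows_mul[OF a] by (simp add: atLeast0LessThan)
qed

lemma hvm_step_zero:
  fixes a b :: "nat \<Rightarrow> 'a::field"
  assumes a0: "a 0 = 0"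
  shows "det (hvm (Suc n) a b) = (-1)^n * b 0 ^ n * (\<Prod>i<n. a (Suc i)) * det (hvm n (\<lambda>i. a (Suc i)) (\<lambda>i. b (Suc i)))"
proof -
  let ?V = "hvm (Suc n) a b"
  have V: "?V \<in> carrier_mat (Suc n) (Suc n)" unfolding hvm_def by simp
  have 1: "det ?V = ?V $$ (0,n) * cofactor ?V 0 n"
    by (rule det_row0_single[OF V], auto simp: hvm_def a0)
  have 2: "?V $$ (0,n) = b 0 ^ n" by (simp add: hvm_def)
  have 3: "mat_delete ?V 0 n = mat n n (\<lambda>(i,j). a (Suc i) * (b (Suc i) ^ j * a (Suc i) ^ (n - 1 - j)))"
    by (rule eq_matI, auto simp: mat_delete_def hvm_def Suc_diff_Suc[symmetric])
  show ?thesis unfolding 1 2 cofactor_def 3 det_rows_scale by (simp add: hvm_def)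
qed

lemma hvm_step_nonzero:
  fixes a b :: "nat \<Rightarrow> 'a::field"
  assumes a0: "a 0 \<noteq> 0"
  shows "det (hvm (Suc n) a b) = (\<Prod>i<n. a 0 * b (Suc i) - b 0 * a (Suc i)) * det (hvm n (\<lambda>i. a (Suc i)) (\<lambda>i. b (Suc i)))"
proof -
  let ?V = "hvm (Suc n) a b"
  define E :: "'a mat" where "E = mat (Suc n) (Suc n) (\<lambda>(m,j). (if m = j then (if j = 0 then 1 else a 0) else 0) + (if Suc m = j then - b 0 else 0))"
  define M :: "'a mat" where "M = mat (Suc n) (Suc n) (\<lambda>(i,j). if j = 0 then a i ^ n else b i ^ (j-1) * a i ^ (n - j) * (a 0 * b i - b 0 * a i))"
  have V: "?V \<in> carrier_mat (Suc n) (Suc n)" unfolding hvm_def by simp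
  have Ec: "E \<in> carrier_mat (Suc n) (Suc n)" unfolding E_def by simp
  have M: "M \<in> carrier_mat (Suc n) (Suc n)" unfolding M_def by simp
  have ut: "upper_triangular E" unfolding E_def upper_triangular_def by auto
  have "det E = (\<Prod>i = 0..<Suc n. E $$ (i,i))"
    using det_upper_triangular[OF ut Ec] prod_list_diag_prod[of E] Ec by simp
  also have "\<dots> = (\<Prod>i = 0..<Suc n. if i = 0 then 1 else a 0)"
    by (rule prod.cong, auto simp: E_def)
  also have "\<dots> = a 0 ^ n"
    by (simp add: prod.atLeast0_lessThan_Suc_shift del: prod.op_ivl_Suc)
  finally have dE: "det E = a 0 ^ n" .
  have VE: "?V * E = M"
  proof (rule eq_matI)
    fix i j assume i: "i < dim_row M" and j: "j < dim_col M"
    hence i: "i < Suc n" and j: "j < Suc n" unfolding M_def by auto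
    have "(?V * E) $$ (i,j) = (\<Sum>m\<in>{0..<Suc n}. ?V $$ (i,m) * E $$ (m,j))"
      using i j V Ec by (simp add: scalar_prod_def)
    also have "\<dots> = (\<Sum>m\<in>{0..<Suc n}. (if m = j then ?V $$ (i,m) * (if j = 0 then 1 else a 0) else 0)
        + (if Suc m = j then - ?V $$ (i,m) * b 0 else 0))"
      by (rule sum.cong, auto simp: E_def j)
    also have "\<dots> = ?V $$ (i,j) * (if j = 0 then 1 else a 0) + (if j = 0 then 0 else - ?V $$ (i,j-1) * b 0)"
    proof (cases j)
      case 0 then show ?thesis by (simp add: sum.distrib)
    next
      case (Suc j')
      have "(\<Sum>m\<in>{0..<Suc n}. (if Suc m = j then - ?V $$ (i,m) * b 0 else 0)) =
            (\<Sum>m\<in>{0..<Suc n}. (if m = j' then - ?V $$ (i,m) * b 0 else 0))"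
        by (rule sum.cong, auto simp: Suc)
      also have "\<dots> = - ?V $$ (i,j') * b 0" using j Suc by simp
      finally show ?thesis using j Suc by (simp add: sum.distrib)
    qed
    also have "\<dots> = M $$ (i,j)"
    proof (cases j)
      case 0 then show ?thesis using i by (simp add: M_def hvm_def)
    next
      case (Suc j')
      have e: "n - j' = Suc (n - Suc j')" using j Suc by simp
      show ?thesis using i j Suc by (simp add: M_def hvm_def e algebra_simps)
    qed
    finally show "(?V * E) $$ (i,j) = M $$ (i,j)" .
  qed (use M Ec V in auto)
  have "det M = M $$ (0,0) * cofactor M 0 0"
    by (rule det_row0_single[OF M], auto simp: M_def)
  also have "M $$ (0,0) = a 0 ^ n" by (simp add: M_def)
  also have "cofactor M 0 0 = det (mat n n (\<lambda>(i,j). (a 0 * b (Suc i) - b 0 * a (Suc i)) * (b (Suc i) ^ j * a (Suc i) ^ (n - 1 - j))))"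
    unfolding cofactor_def
    by (simp, rule arg_cong[where f=det], rule eq_matI, auto simp: mat_delete_def M_def)
  finally have dM: "det M = a 0 ^ n * ((\<Prod>i<n. a 0 * b (Suc i) - b 0 * a (Suc i)) * det (hvm n (\<lambda>i. a (Suc i)) (\<lambda>i. b (Suc i))))"
    unfolding det_rows_scale by (simp add: hvm_def)
  have "det ?V * a 0 ^ n = a 0 ^ n * ((\<Prod>i<n. a 0 * b (Suc i) - b 0 * a (Suc i)) * det (hvm n (\<lambda>i. a (Suc i)) (\<lambda>i. b (Suc i))))"
    using det_mult[OF V Ec] VE dE dM by (simp only: mult.commute)
  thus ?thesis using a0 by (simp add: mult.commute)
qed

lemma prod_first_row:
  fixes P :: "nat \<Rightarrow> nat \<Rightarrow> 'a::comm_monoid_mult"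
  shows "(\<Prod>i<Suc n. \<Prod>j\<in>{Suc i..<Suc n}. P i j) =
   (\<Prod>i<n. P 0 (Suc i)) * (\<Prod>i<n. \<Prod>j\<in>{Suc i..<n}. P (Suc i) (Suc j))"
proof -
  have a: "(\<Prod>j\<in>{Suc m..<Suc n}. f j) = (\<Prod>j\<in>{m..<n}. f (Suc j))" for m and f :: "nat \<Rightarrow> 'a"
    by (rule prod.shift_bounds_Suc_ivl)
  show ?thesis
    unfolding prod.lessThan_Suc_shift
    using a[where m=0 and f="P 0"] by (simp only: a lessThan_atLeast0 One_nat_def)
qed

theorem hvm_det:
  fixes a b :: "nat \<Rightarrow> 'a::field"
  shows "det (hvm n a b) = (\<Prod>i<n. \<Prod>j\<in>{Suc i..<n}. (a i * b j - a j * b i))"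
proof (induction n arbitrary: a b)
  case 0
  show ?case by (simp add: hvm_def)
next
  case (Suc n)
  have IH: "det (hvm n (\<lambda>i. a (Suc i)) (\<lambda>i. b (Suc i))) =
     (\<Prod>i<n. \<Prod>j\<in>{Suc i..<n}. (a (Suc i) * b (Suc j) - a (Suc j) * b (Suc i)))"
    by (rule Suc.IH)
  show ?case
  proof (cases "a 0 = 0")
    case True
    have "(\<Prod>i<n. a 0 * b (Suc i) - a (Suc i) * b 0) = (\<Prod>i<n. (- b 0) * a (Suc i))"
      by (rule prod.cong, rule refl, simp add: True)
    also have "\<dots> = (\<Prod>i<n. (- b 0)) * (\<Prod>i<n. a (Suc i))"
      by (rule prod.distrib)
    also have "\<dots> = (-1)^n * b 0 ^ n * (\<Prod>i<n. a (Suc i))"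
      by (simp only: prod_constant card_lessThan power_minus[of "b 0"])
    finally have e: "(\<Prod>i<n. a 0 * b (Suc i) - a (Suc i) * b 0) = (-1)^n * b 0 ^ n * (\<Prod>i<n. a (Suc i))" .
    show ?thesis unfolding prod_first_row hvm_step_zero[where a=a and b=b and n=n, OF True] IH e ..
  next
    case False
    have e: "(\<Prod>i<n. a 0 * b (Suc i) - a (Suc i) * b 0) = (\<Prod>i<n. a 0 * b (Suc i) - b 0 * a (Suc i))"
      by (rule prod.cong, rule refl, simp only: mult.commute)
    show ?thesis unfolding prod_first_row hvm_step_nonzero[where a=a and b=b and n=n, OF False] IH e ..
  qed
qed



lemma cfib_first_step:
  fixes x s q :: "'a::field"
  shows "cfib_nat (Suc (Suc N)) x s q = x * cfib_nat (Suc N) x (q*s) q + q * s * cfib_nat N x (q*(q*s)) q"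
proof (induction N arbitrary: s rule: less_induct)
  case (less N)
  show ?case
  proof (cases N)
    case 0 then show ?thesis by simp
  next
    case (Suc M)
    show ?thesis
    proof (cases M)
      case 0 then show ?thesis using Suc by (simp add: algebra_simps)
    next
      case (Suc K)
      have IH1: "cfib_nat (Suc (Suc K)) x s q = x * cfib_nat (Suc K) x (q*s) q + q * s * cfib_nat K x (q*(q*s)) q"
        using less.IH[of K s] Suc \<open>N = Suc M\<close> by simp
      have IH2: "cfib_nat (Suc (Suc M)) x s q = x * cfib_nat (Suc M) x (q*s) q + q * s * cfib_nat M x (q*(q*s)) q"
        using less.IH[of M s] \<open>N = Suc M\<close> by simp
      show ?thesis unfolding \<open>N = Suc M\<close> Suc
        using IH1 IH2 unfolding Suc
        by (simp add: algebra_simps power_Suc)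
    qed
  qed
qed

definition cG :: "nat \<Rightarrow> 'a::field \<Rightarrow> 'a \<Rightarrow> 'a \<Rightarrow> 'a" where
  "cG m x s q = (if m = 0 then inverse s else cfib_nat (m - 1) x (q*s) q)"

lemma cG_rec:
  fixes x s q :: "'a::field"
  assumes "s \<noteq> 0"
  shows "cG (Suc (Suc k)) x s q = x * cG (Suc k) x s q + q^k * s * cG k x s q"
proof (cases k)
  case 0 then show ?thesis using assms by (simp add: cG_def)
next
  case (Suc j) then show ?thesis by (simp add: cG_def algebra_simps power_Suc)
qed

lemma choose2_SS: "(Suc (Suc k) choose 2) = (k choose 2) + k + k + 1"
  by (simp add: numeral_2_eq_2)

lemma choose2_S: "(Suc k choose 2) = (k choose 2) + k"
  by (simp add: numeral_2_eq_2)

lemma cassini_gen: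
  fixes x s q :: "'a::field"
  assumes s: "s \<noteq> 0"
  shows "m \<le> n \<Longrightarrow> s * (cG m x s q * cfib_nat n x s q - cG n x s q * cfib_nat m x s q)
     = (-1)^m * s^m * q^(m choose 2) * cfib_nat (n - m) x (q^m * s) q"
proof (induction m rule: less_induct)
  case (less m)
  show ?case
  proof (cases m)
    case 0 then show ?thesis using s by (simp add: cG_def numeral_2_eq_2)
  next
    case (Suc m')
    show ?thesis
    proof (cases m')
      case 0
      have "n \<noteq> 0" using less.prems Suc 0 by simp
      then show ?thesis using Suc 0 by (simp add: cG_def numeral_2_eq_2)
    next
      case (Suc k)
      have m: "m = Suc (Suc k)" using Suc \<open>m = Suc m'\<close> by simp
      define N where "N = n - Suc (Suc k)"
      have n: "n = N + Suc (Suc k)" using less.prems m N_def by simp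
      let ?L = "\<lambda>j. s * (cG j x s q * cfib_nat n x s q - cG n x s q * cfib_nat j x s q)"
      have IH1: "?L (Suc k) = (-1)^(Suc k) * s^(Suc k) * q^(Suc k choose 2) * cfib_nat (n - Suc k) x (q^(Suc k) * s) q"
        using less.IH[of "Suc k"] less.prems m by simp
      have IH0: "?L k = (-1)^k * s^k * q^(k choose 2) * cfib_nat (n - k) x (q^k * s) q"
        using less.IH[of k] less.prems m by simp
      have rec: "?L (Suc (Suc k)) = x * ?L (Suc k) + q^k * s * ?L k"
        unfolding cG_rec[OF s] by (simp add: algebra_simps)
      have e1: "n - Suc k = Suc N" using n by simp
      have e0: "n - k = Suc (Suc N)" using n by simp
      have e2: "n - Suc (Suc k) = N" using n by simp
      have fs: "cfib_nat (Suc (Suc N)) x (q^k * s) q = x * cfib_nat (Suc N) x (q^(Suc k) * s) q + q^(Suc k) * s * cfib_nat N x (q^(Suc (Suc k)) * s) q"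
        using cfib_first_step[of N x "q^k * s" q] by (simp add: algebra_simps)
      show ?thesis unfolding m rec IH1 IH0 e1 e0 e2 fs choose2_SS choose2_S
        by (simp add: algebra_simps power_add)
    qed
  qed
qed



lemma sumT_step:
  "(\<Sum>i<Suc (Suc k). (Suc k - i) * g i) = (\<Sum>i<Suc k. (k - i) * g i) + (\<Sum>i<Suc k. g i)"
proof -
  have "(\<Sum>i<Suc (Suc k). (Suc k - i) * g i) = (\<Sum>i<Suc k. (Suc k - i) * g i)"
    by (simp add: lessThan_Suc)
  also have "\<dots> = (\<Sum>i<Suc k. (k - i) * g i + g i)"
    by (rule sum.cong, auto simp: Suc_diff_le)
  finally show ?thesis by (simp add: sum.distrib)
qed

lemma sum_id_choose: "(\<Sum>i<Suc k. i) = (Suc k choose 2)"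
  by (induction k) (simp_all add: numeral_2_eq_2)

lemma sum_choose2: "(\<Sum>i<Suc k. (i choose 2)) = (Suc k choose 3)"
proof (induction k)
  case 0 then show ?case by (simp add: numeral_3_eq_3)
next
  case (Suc k)
  have "(Suc (Suc k) choose 3) = (Suc k choose 2) + (Suc k choose 3)"
    by (simp add: numeral_3_eq_3 numeral_2_eq_2)
  then show ?case using Suc by simp
qed

lemma T1: "(\<Sum>i<Suc k. (k - i)) = (Suc k choose 2)"
proof (induction k)
  case 0 then show ?case by simp
next
  case (Suc k)
  have "(\<Sum>i<Suc (Suc k). (Suc k - i)) = (\<Sum>i<Suc (Suc k). (Suc k - i) * 1)" by simp
  also have "\<dots> = (\<Sum>i<Suc k. (k - i) * 1) + (\<Sum>i<Suc k. 1)" by (rule sumT_step)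
  finally show ?case using Suc by (simp add: numeral_2_eq_2)
qed

lemma T2: "(\<Sum>i<Suc k. (k - i) * i) = (Suc k choose 3)"
proof (induction k)
  case 0 then show ?case by simp
next
  case (Suc k)
  have "(\<Sum>i<Suc (Suc k). (Suc k - i) * i) = (\<Sum>i<Suc k. (k - i) * i) + (\<Sum>i<Suc k. i)" by (rule sumT_step)
  also have "\<dots> = (Suc k choose 3) + (Suc k choose 2)" using Suc sum_id_choose by simp
  also have "\<dots> = (Suc (Suc k) choose 3)" by (simp add: numeral_3_eq_3 numeral_2_eq_2)
  finally show ?case .
qed

lemma T3: "(\<Sum>i<Suc k. (k - i) * (i choose 2)) = (Suc k choose 4)"
proof (induction k)
  case 0 then show ?case by simp
next
  case (Suc k)
  have "(\<Sum>i<Suc (Suc k). (Suc k - i) * (i choose 2)) = (\<Sum>i<Suc k. (k - i) * (i choose 2)) + (\<Sum>i<Suc k. (i choose 2))" by (rule sumT_step)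
  also have "\<dots> = (Suc k choose 4) + (Suc k choose 3)" using Suc sum_choose2 by simp
  also have "\<dots> = (Suc (Suc k) choose 4)"
  proof -
    have f: "(4::nat) = Suc 3" by simp
    show ?thesis unfolding f binomial_Suc_Suc by simp
  qed
  finally show ?case .
qed

lemma choose2_add: "((a::nat) + b choose 2) = (a choose 2) + (b choose 2) + a * b"
  by (induction b) (simp_all add: numeral_2_eq_2)

lemma choose2_mult: "((l::nat) * i choose 2) = l^2 * (i choose 2) + (l choose 2) * i"
proof (induction i)
  case 0 then show ?case by simp
next
  case (Suc i)
  have "l * Suc i = l * i + l" by simp
  then have "(l * Suc i choose 2) = (l * i choose 2) + (l choose 2) + l * i * l"
    using choose2_add by simp
  also have "\<dots> = l^2 * (Suc i choose 2) + (l choose 2) * Suc i"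
    using Suc by (simp add: numeral_2_eq_2 power2_eq_square algebra_simps)
  finally show ?case .
qed

lemma T4: "(\<Sum>i<Suc k. (k - i) * (l * i choose 2)) = (Suc k choose 3) * (l choose 2) + (Suc k choose 4) * l^2"
proof -
  have "(\<Sum>i<Suc k. (k - i) * (l * i choose 2)) = (\<Sum>i<Suc k. l^2 * ((k - i) * (i choose 2)) + (l choose 2) * ((k - i) * i))"
    by (rule sum.cong, simp, subst choose2_mult, simp only: distrib_left ac_simps)
  also have "\<dots> = l^2 * (\<Sum>i<Suc k. (k - i) * (i choose 2)) + (l choose 2) * (\<Sum>i<Suc k. (k - i) * i)"
    by (simp add: sum.distrib sum_distrib_left)
  finally show ?thesis using T2 T3 by simp
qed


lemma a_eq:
  fixes x s q :: "'a::field"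
  assumes "q \<noteq> 0" "0 < l"
  shows "cfib (int l * int i - 1) x (q * s) q = cG (l*i) x s q"
proof (cases "i = 0")
  case True
  have "cfib (int l * int i - 1) x (q * s) q = cfib_neg (Suc (Suc 0)) x (q*s) q"
    using True by (simp add: cfib_def numeral_2_eq_2)
  also have "\<dots> = inverse s" using assms by (simp add: numeral_2_eq_2 power_int_minus field_simps)
  finally show ?thesis using True by (simp add: cG_def)
next
  case False
  then have p: "0 < l * i" using assms by simp
  have e: "int l * int i - 1 = int (l*i - 1)" using p by simp
  have e2: "nat (int l * int i - 1) = l*i - 1" by (metis e nat_int)
  have e3: "0 \<le> int l * int i - 1" using e by simp
  show ?thesis using p e3 unfolding cfib_def cG_def by (simp add: e2)
qed

lemma nat_ii[simp]: "nat (int a * int b) = a * b"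
  by (metis nat_int of_nat_mult)

lemma b_eq: "cfib (int l * int i) x s q = cfib_nat (l*i) x s q"
  by (simp add: cfib_def nat_mult_distrib)

lemma inner_prod:
  fixes x s q :: "'a::field"
  assumes s: "s \<noteq> 0" and i: "i \<le> k"
  shows "(\<Prod>j\<in>{Suc i..<Suc k}. cG (l*i) x s q * cfib_nat (l*j) x s q - cG (l*j) x s q * cfib_nat (l*i) x s q)
    = ((-1)^(l*i) * s^(l*i) * q^(l*i choose 2) / s) ^ (k - i) * cfac (k - i) x (q^(l*i) * s) l q"
proof -
  let ?Y = "(-1)^(l*i) * s^(l*i) * q^(l*i choose 2) / s"
  have "(\<Prod>j\<in>{Suc i..<Suc k}. cG (l*i) x s q * cfib_nat (l*j) x s q - cG (l*j) x s q * cfib_nat (l*i) x s q)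
     = (\<Prod>j\<in>{Suc i..<Suc k}. ?Y * cfib_nat (l*j - l*i) x (q^(l*i) * s) q)"
  proof (rule prod.cong)
    fix j assume "j \<in> {Suc i..<Suc k}"
    then have "l*i \<le> l*j" by simp
    from cassini_gen[OF s this, of x q]
    show "cG (l*i) x s q * cfib_nat (l*j) x s q - cG (l*j) x s q * cfib_nat (l*i) x s q = ?Y * cfib_nat (l*j - l*i) x (q^(l*i) * s) q"
      using s by (simp add: field_simps)
  qed simp
  also have "\<dots> = ?Y ^ (k - i) * (\<Prod>j\<in>{Suc i..<Suc k}. cfib_nat (l*j - l*i) x (q^(l*i) * s) q)"
    by (simp only: prod.distrib prod_constant card_atLeastLessThan diff_Suc_Suc)
  also have "(\<Prod>j\<in>{Suc i..<Suc k}. cfib_nat (l*j - l*i) x (q^(l*i) * s) q) = cfac (k - i) x (q^(l*i) * s) l q"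
  proof -
    have e: "{Suc i..<Suc k} = {1 + i..<Suc (k - i) + i}" using i by auto
    have "(\<Prod>j\<in>{Suc i..<Suc k}. cfib_nat (l*j - l*i) x (q^(l*i) * s) q)
        = (\<Prod>t\<in>{1..<Suc (k - i)}. cfib_nat (l*(t+i) - l*i) x (q^(l*i) * s) q)"
      unfolding e by (rule prod.shift_bounds_nat_ivl)
    also have "\<dots> = (\<Prod>t = 1..k - i. cfib (int (t*l)) x (q^(l*i) * s) q)"
      by (rule prod.cong, auto simp: cfib_def algebra_simps)
    finally show ?thesis unfolding cfac_def .
  qed
  finally show ?thesis .
qed


lemma prod_Y:
  fixes s q :: "'a::field"
  shows "(\<Prod>i<Suc k. ((-1)^(l*i) * s^(l*i) * q^(l*i choose 2) / s) ^ (k - i))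
    = (-1)^(l * (Suc k choose 3)) * s^(l * (Suc k choose 3)) * q^((Suc k choose 3) * (l choose 2) + (Suc k choose 4) * l^2) / s^(Suc k choose 2)"
proof -
  have "(\<Prod>i<Suc k. ((-1)^(l*i) * s^(l*i) * q^(l*i choose 2) / s) ^ (k - i))
     = (\<Prod>i<Suc k. (-1)^((k - i) * (l*i)) * s^((k - i) * (l*i)) * q^((k - i) * (l*i choose 2)) / s^(k - i))"
    by (rule prod.cong, simp, simp add: power_mult_distrib power_divide power_mult[symmetric] mult.commute)
  also have "\<dots> = (-1)^(\<Sum>i<Suc k. (k - i) * (l*i)) * s^(\<Sum>i<Suc k. (k - i) * (l*i)) * q^(\<Sum>i<Suc k. (k - i) * (l*i choose 2)) / s^(\<Sum>i<Suc k. (k - i))"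
    by (simp add: power_sum prod.distrib prod_dividef)
  also have "(\<Sum>i<Suc k. (k - i) * (l*i)) = l * (Suc k choose 3)"
  proof -
    have "(\<Sum>i<Suc k. (k - i) * (l*i)) = l * (\<Sum>i<Suc k. (k - i) * i)"
      by (subst sum_distrib_left, rule sum.cong, simp_all)
    then show ?thesis using T2[of k] by simp
  qed
  finally show ?thesis using T1 T4 by simp
qed

theorem lemma3:
  fixes x s q :: "'a::field"
  assumes "s \<noteq> 0" and "q \<noteq> 0"
    and "0 < l" and "0 < k"
  shows "det (mat (k+1) (k+1) (\<lambda>(i,j).
             cfib (int l * int i - 1) x (q * s) q ^ j * (- cfib (int l * int i) x s q) ^ (k - j)))
         = det (mat (k+1) (k+1) (\<lambda>(i,j).
             cfib (int l * int i) x s q ^ j * cfib (int l * int i - 1) x (q * s) q ^ (k - j)))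
       \<and> det (mat (k+1) (k+1) (\<lambda>(i,j).
             cfib (int l * int i) x s q ^ j * cfib (int l * int i - 1) x (q * s) q ^ (k - j)))
         = (- 1) ^ ((k+1 choose 3) * l)
           * s powi (int ((k+1 choose 3) * l) - int (k+1 choose 2))
           * q ^ ((k+1 choose 3) * (l choose 2) + (k+1 choose 4) * l^2)
           * (\<Prod>j = 0..k-1. cfac (k - j) x (q ^ (l * j) * s) l q)"
proof -
  define a where "a = (\<lambda>i::nat. cfib (int l * int i - 1) x (q * s) q)"
  define b where "b = (\<lambda>i::nat. cfib (int l * int i) x s q)"
  have aeq: "a i = cG (l*i) x s q" for i unfolding a_def by (rule a_eq[OF assms(2,3)])
  have beq: "b i = cfib_nat (l*i) x s q" for i unfolding b_def by (rule b_eq)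
  have M2: "mat (k+1) (k+1) (\<lambda>(i,j). cfib (int l * int i) x s q ^ j * cfib (int l * int i - 1) x (q * s) q ^ (k - j))
     = hvm (Suc k) a b"
    by (rule eq_matI, auto simp: hvm_def a_def b_def)
  have M1: "mat (k+1) (k+1) (\<lambda>(i,j). cfib (int l * int i - 1) x (q * s) q ^ j * (- cfib (int l * int i) x s q) ^ (k - j))
     = hvm (Suc k) (\<lambda>i. - b i) a"
    by (rule eq_matI, auto simp: hvm_def a_def b_def)
  let ?P = "\<Prod>i<Suc k. \<Prod>j\<in>{Suc i..<Suc k}. (a i * b j - a j * b i)"
  have D2: "det (hvm (Suc k) a b) = ?P" by (rule hvm_det)
  have D1: "det (hvm (Suc k) (\<lambda>i. - b i) a) = ?P"
    unfolding hvm_det by (rule prod.cong, simp, rule prod.cong, simp, simp add: algebra_simps)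
  have P: "?P = (\<Prod>i<Suc k. ((-1)^(l*i) * s^(l*i) * q^(l*i choose 2) / s) ^ (k - i) * cfac (k - i) x (q^(l*i) * s) l q)"
    unfolding aeq beq by (rule prod.cong, simp, rule inner_prod[OF assms(1)], simp)
  also have "\<dots> = (\<Prod>i<Suc k. ((-1)^(l*i) * s^(l*i) * q^(l*i choose 2) / s) ^ (k - i)) * (\<Prod>i<Suc k. cfac (k - i) x (q^(l*i) * s) l q)"
    by (rule prod.distrib)
  also have "(\<Prod>i<Suc k. cfac (k - i) x (q^(l*i) * s) l q) = (\<Prod>j = 0..k-1. cfac (k - j) x (q ^ (l * j) * s) l q)"
  proof -
    have "{0..k-1} = {..<k}" using assms(4) by auto
    then show ?thesis by (simp add: cfac_def)
  qed
  finally have P2: "?P = (-1)^(l * (Suc k choose 3)) * s^(l * (Suc k choose 3)) * q^((Suc k choose 3) * (l choose 2) + (Suc k choose 4) * l^2) / s^(Suc k choose 2)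
     * (\<Prod>j = 0..k-1. cfac (k - j) x (q ^ (l * j) * s) l q)"
    unfolding prod_Y .
  have pw: "s powi (int ((Suc k choose 3) * l) - int (Suc k choose 2)) = s^(l * (Suc k choose 3)) / s^(Suc k choose 2)"
    by (simp only: power_int_diff[OF disjI1[OF assms(1)]] power_int_of_nat mult.commute)
  show ?thesis unfolding M1 M2 D1 D2 unfolding Suc_eq_plus1[symmetric] unfolding pw P2
    by (simp add: mult.commute)
qed

end
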